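(* Let $q_1,\dots,q_5\in\widehat{\mathbb H}$ be five distinct points not lying on a single 2-sphere or 2-plane. Then any fractional linear transformation $T$ of $\widehat{\mathbb H}$ is uniquely determined by its values $T(q_n)$, $n=1,\dots,5$; i.e., if $T,T'$ are fractional linear transformations with $T(q_n)=T'(q_n)$ for $n=1,\dots,5$, then $T=T'$.
   Context: $\mathbb H$ denotes the quaternions (identified with $\mathbb R^4$), $\widehat{\mathbb H}=\mathbb H\cup\{\infty\}$. A fractional linear transformation of $\widehat{\mathbb H}$ is a map $q\mapsto(aq+b)(cq+d)^{-1}$ with $\begin{pmatrix}a&b\\c&d\end{pmatrix}\in GL(2,\mathbb H)$ invertible. *)

theory Defs
  imports "HOL-Analysis.Analysis"
begin

text \<open>Quaternions identified with R^4 (components 1,2,3,4 = real, i, j, k parts).\<close>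
type_synonym quat = "real^4"

definition qmul :: "quat \<Rightarrow> quat \<Rightarrow> quat" where
  "qmul x y = vector [
     x$1 * y$1 - x$2 * y$2 - x$3 * y$3 - x$4 * y$4,
     x$1 * y$2 + x$2 * y$1 + x$3 * y$4 - x$4 * y$3,
     x$1 * y$3 - x$2 * y$4 + x$3 * y$1 + x$4 * y$2,
     x$1 * y$4 + x$2 * y$3 - x$3 * y$2 + x$4 * y$1]"

definition qone :: quat where
  "qone = vector [1, 0, 0, 0]"

definition qconj :: "quat \<Rightarrow> quat" where
  "qconj x = vector [x$1, - x$2, - x$3, - x$4]"

text \<open>Multiplicative inverse (the value at 0 is irrelevant; it is 0).\<close>
definition qinv :: "quat \<Rightarrow> quat" where
  "qinv x = (1 / (norm x)\<^sup>2) *\<^sub>R qconj x"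

datatype hquat = Fin quat | Inf

definition gl2 :: "quat \<Rightarrow> quat \<Rightarrow> quat \<Rightarrow> quat \<Rightarrow> bool" where
  "gl2 a b c d \<longleftrightarrow> (\<exists>a' b' c' d'.
      qmul a a' + qmul b c' = qone \<and> qmul a b' + qmul b d' = 0 \<and>
      qmul c a' + qmul d c' = 0 \<and> qmul c b' + qmul d d' = qone \<and>
      qmul a' a + qmul b' c = qone \<and> qmul a' b + qmul b' d = 0 \<and>
      qmul c' a + qmul d' c = 0 \<and> qmul c' b + qmul d' d = qone)"

fun flt :: "quat \<Rightarrow> quat \<Rightarrow> quat \<Rightarrow> quat \<Rightarrow> hquat \<Rightarrow> hquat" where
  "flt a b c d (Fin q) =
     (if qmul c q + d = 0 then Inf else Fin (qmul (qmul a q + b) (qinv (qmul c q + d))))"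
| "flt a b c d Inf = (if c = 0 then Inf else Fin (qmul a (qinv c)))"

definition is_flt :: "(hquat \<Rightarrow> hquat) \<Rightarrow> bool" where
  "is_flt T \<longleftrightarrow> (\<exists>a b c d. gl2 a b c d \<and> T = flt a b c d)"

definition on_2sphere_or_2plane :: "hquat set \<Rightarrow> bool" where
  "on_2sphere_or_2plane S \<longleftrightarrow>
     (\<exists>c r A. r > 0 \<and> affine A \<and> aff_dim A = 3 \<and> c \<in> A \<and> S \<subseteq> Fin ` (sphere c r \<inter> A)) \<or>
     (\<exists>P. affine P \<and> aff_dim P = 2 \<and> S \<subseteq> insert Inf (Fin ` P))"

end

theory Submission
  imports Defs
begin


lemma vector_4 [simp]:
  "(vector[a,b,c,d] :: real^4) $ 1 = a" "(vector[a,b,c,d] :: real^4) $ 2 = b"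
  "(vector[a,b,c,d] :: real^4) $ 3 = c" "(vector[a,b,c,d] :: real^4) $ 4 = d"
  unfolding vector_def by simp_all

lemma qeq: "(x::quat) = y \<longleftrightarrow> x$1 = y$1 \<and> x$2 = y$2 \<and> x$3 = y$3 \<and> x$4 = y$4"
  by (simp add: vec_eq_iff forall_4)

lemma qmul_c [simp]:
  "qmul x y $ 1 = x$1 * y$1 - x$2 * y$2 - x$3 * y$3 - x$4 * y$4"
  "qmul x y $ 2 = x$1 * y$2 + x$2 * y$1 + x$3 * y$4 - x$4 * y$3"
  "qmul x y $ 3 = x$1 * y$3 - x$2 * y$4 + x$3 * y$1 + x$4 * y$2"
  "qmul x y $ 4 = x$1 * y$4 + x$2 * y$3 - x$3 * y$2 + x$4 * y$1"
  by (simp_all add: qmul_def)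

lemma qone_c [simp]: "qone $ 1 = 1" "qone $ 2 = 0" "qone $ 3 = 0" "qone $ 4 = 0"
  by (simp_all add: qone_def)

lemma qconj_c [simp]: "qconj x $ 1 = x$1" "qconj x $ 2 = - x$2" "qconj x $ 3 = - x$3" "qconj x $ 4 = - x$4"
  by (simp_all add: qconj_def)

lemma normsq: "(norm (x::quat))^2 = x$1^2 + x$2^2 + x$3^2 + x$4^2"
  unfolding power2_norm_eq_inner inner_vec_def sum_4 by (simp add: power2_eq_square)

lemma inner_q: "(x::quat) \<bullet> y = x$1*y$1 + x$2*y$2 + x$3*y$3 + x$4*y$4"
  by (simp add: inner_vec_def sum_4)

lemma qmul_assoc: "qmul (qmul x y) z = qmul x (qmul y z)"
  by (simp add: qeq algebra_simps)
lemma qmul_add_left: "qmul (x + y) z = qmul x z + qmul y z"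
  by (simp add: qeq algebra_simps)
lemma qmul_add_right: "qmul z (x + y) = qmul z x + qmul z y"
  by (simp add: qeq algebra_simps)
lemma qmul_diff_left: "qmul (x - y) z = qmul x z - qmul y z"
  by (simp add: qeq algebra_simps)
lemma qmul_diff_right: "qmul z (x - y) = qmul z x - qmul z y"
  by (simp add: qeq algebra_simps)
lemma qmul_minus_left [simp]: "qmul (- x) z = - qmul x z"
  by (simp add: qeq algebra_simps)
lemma qmul_minus_right [simp]: "qmul z (- x) = - qmul z x"
  by (simp add: qeq algebra_simps)
lemma qmul_scaleR_left [simp]: "qmul (r *\<^sub>R x) z = r *\<^sub>R qmul x z"
  by (simp add: qeq algebra_simps)
lemma qmul_scaleR_right [simp]: "qmul z (r *\<^sub>R x) = r *\<^sub>R qmul z x"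
  by (simp add: qeq algebra_simps)
lemma qmul_zero [simp]: "qmul 0 z = 0" "qmul z 0 = 0"
  by (simp_all add: qeq)
lemma qmul_one [simp]: "qmul qone z = z" "qmul z qone = z"
  by (simp_all add: qeq)
lemma qconj_mul: "qconj (qmul x y) = qmul (qconj y) (qconj x)"
  by (simp add: qeq algebra_simps)
lemma qconj_conj [simp]: "qconj (qconj x) = x"
  by (simp add: qeq)
lemma qmul_conj_right: "qmul x (qconj x) = (norm x)^2 *\<^sub>R qone"
  unfolding normsq by (simp add: qeq algebra_simps power2_eq_square)
lemma qmul_conj_left: "qmul (qconj x) x = (norm x)^2 *\<^sub>R qone"
  unfolding normsq by (simp add: qeq algebra_simps power2_eq_square)
lemma norm_qmul: "norm (qmul x y) = norm x * norm y"
proof -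
  have "(norm (qmul x y))^2 = (norm x * norm y)^2"
    unfolding power_mult_distrib normsq by (simp add: algebra_simps power2_eq_square)
  then show ?thesis by (simp add: power2_eq_iff_nonneg)
qed
lemma norm_qconj [simp]: "norm (qconj x) = norm x"
proof -
  have "(norm (qconj x))^2 = (norm x)^2" by (simp add: normsq)
  then show ?thesis by (simp add: power2_eq_iff_nonneg)
qed
lemma qone_nz [simp]: "qone \<noteq> 0"
  by (simp add: qeq)
lemma norm_qone [simp]: "norm qone = 1"
proof -
  have h: "(norm qone)^2 = 1^2" using normsq[of qone] by simp
  show ?thesis using power2_eq_iff_nonneg[of "norm qone" 1] h by simp
qed
lemma qinv_right: "x \<noteq> 0 \<Longrightarrow> qmul x (qinv x) = qone"
  by (simp add: qinv_def qmul_conj_right)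
lemma qinv_left: "x \<noteq> 0 \<Longrightarrow> qmul (qinv x) x = qone"
  by (simp add: qinv_def qmul_conj_left)
lemma qmul_eq_0: "qmul x y = 0 \<longleftrightarrow> x = 0 \<or> y = 0"
  by (metis norm_eq_zero norm_qmul mult_eq_0_iff)
lemma qinv_nz: "x \<noteq> 0 \<Longrightarrow> qinv x \<noteq> 0"
  using qinv_right by fastforce
lemma qinv_mul: "x \<noteq> 0 \<Longrightarrow> y \<noteq> 0 \<Longrightarrow> qinv (qmul x y) = qmul (qinv y) (qinv x)"
proof -
  assume x: "x \<noteq> 0" and y: "y \<noteq> 0"
  have xy: "qmul x y \<noteq> 0" using x y qmul_eq_0 by blast
  have "qmul (qmul (qinv y) (qinv x)) (qmul x y) = qone"
    by (metis qmul_assoc qinv_left qmul_one x y)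
  moreover have "qmul (qinv y) (qinv x) = qmul (qmul (qmul (qinv y) (qinv x)) (qmul x y)) (qinv (qmul x y))"
    by (metis qmul_assoc qinv_right xy qmul_one(2))
  ultimately show ?thesis by simp
qed
lemma qinv_0 [simp]: "qinv 0 = 0" by (simp add: qinv_def qconj_def)
lemma qmul_cancel_left: "a \<noteq> 0 \<Longrightarrow> qmul a x = qmul a y \<longleftrightarrow> x = y"
  by (metis qmul_assoc qinv_left qmul_one)
lemma qmul_cancel_right: "a \<noteq> 0 \<Longrightarrow> qmul x a = qmul y a \<longleftrightarrow> x = y"
  by (metis qmul_assoc qinv_right qmul_one)
lemma norm_qinv: "norm (qinv x) = inverse (norm x)"
proof (cases "x = 0")
  case False
  have "norm x * norm (qinv x) = 1" using qinv_right[OF False] norm_qmul[of x "qinv x"] by simp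
  then show ?thesis using False by (auto simp: field_simps)
qed simp
lemma qreal_comm: "qmul (r *\<^sub>R qone) x = qmul x (r *\<^sub>R qone)"
  by simp
lemma linear_qmul_left: "linear (qmul a)"
  by (rule linearI) (simp_all add: qmul_add_right)
lemma linear_qmul_right: "linear (\<lambda>x. qmul x a)"
  by (rule linearI) (simp_all add: qmul_add_left)




lemma sphere_case:
  fixes S :: "hquat set"
  assumes two: "Fin x \<in> S" "Fin y \<in> S" "x \<noteq> y"
  and fin: "\<And>q. Fin q \<in> S \<Longrightarrow> a1 * (norm q)^2 + u1 \<bullet> q + b1 = 0 \<and> a2 * (norm q)^2 + u2 \<bullet> q + b2 = 0"
  and inf: "Inf \<in> S \<Longrightarrow> a1 = 0 \<and> a2 = 0"
  and indep: "\<And>s1 s2. (\<forall>q. s1 * (a1*(norm q)^2 + u1\<bullet>q + b1) + s2*(a2*(norm q)^2 + u2\<bullet>q + b2) = 0) \<Longrightarrow> s1 = 0 \<and> s2 = 0"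
  and a1: "a1 \<noteq> 0"
  shows "on_2sphere_or_2plane S"
proof -
  define w where "w = a1 *\<^sub>R u2 - a2 *\<^sub>R u1"
  define \<beta> where "\<beta> = a1 * b2 - a2 * b1"
  have D: "w \<bullet> q + \<beta> = 0" if "Fin q \<in> S" for q
  proof -
    have "a1 * (a2 * (norm q)^2 + u2 \<bullet> q + b2) - a2 * (a1 * (norm q)^2 + u1 \<bullet> q + b1) = 0"
      using fin[OF that] by simp
    then show ?thesis unfolding w_def \<beta>_def by (simp add: algebra_simps inner_diff_left)
  qed
  have w0: "w \<noteq> 0"
  proof
    assume "w = 0"
    then have "\<beta> = 0" using D[OF two(1)] by simp
    have "\<forall>q. (- a2) * (a1*(norm q)^2 + u1\<bullet>q + b1) + a1*(a2*(norm q)^2 + u2\<bullet>q + b2) = 0"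
    proof
      fix q
      have "w \<bullet> q + \<beta> = 0" using \<open>w = 0\<close> \<open>\<beta> = 0\<close> by simp
      then show "(- a2) * (a1*(norm q)^2 + u1\<bullet>q + b1) + a1*(a2*(norm q)^2 + u2\<bullet>q + b2) = 0"
        unfolding w_def \<beta>_def by (simp add: algebra_simps inner_diff_left)
    qed
    then show False using indep a1 by blast
  qed
  have noinf: "Inf \<notin> S" using inf a1 by blast
  define c0 where "c0 = - (1 / (2 * a1)) *\<^sub>R u1"
  define R where "R = (norm c0)^2 - b1 / a1"
  have E: "(norm (q - c0))^2 = R" if "Fin q \<in> S" for q
  proof -
    have h: "a1 * (norm q)^2 + u1 \<bullet> q + b1 = 0" using fin[OF that] by simp
    have "(norm (q - c0))^2 = (norm q)^2 - 2 * (q \<bullet> c0) + (norm c0)^2"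
      by (simp add: power2_norm_eq_inner inner_diff_left inner_diff_right inner_commute)
    also have "\<dots> = (norm q)^2 + (u1 \<bullet> q) / a1 + (norm c0)^2"
      unfolding c0_def using a1 by (simp add: inner_commute field_simps)
    also have "\<dots> = R" unfolding R_def using h a1 by (simp add: field_simps)
    finally show ?thesis .
  qed
  define k where "k = (- \<beta> - w \<bullet> c0) / (norm w)^2"
  define c where "c = c0 + k *\<^sub>R w"
  have cA: "w \<bullet> c = - \<beta>" unfolding c_def k_def using w0
    by (simp add: inner_add_right power2_norm_eq_inner[symmetric] field_simps)
  define \<rho> where "\<rho> = R - k^2 * (norm w)^2"
  have E2: "(norm (q - c))^2 = \<rho>" if "Fin q \<in> S" for q
  proof -
    have orth: "(q - c) \<bullet> w = 0" using D[OF that] cA by (simp add: inner_diff_right inner_commute[of _ w])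
    have "q - c0 = (q - c) + k *\<^sub>R w" unfolding c_def by simp
    moreover have "orthogonal (q - c) (k *\<^sub>R w)" using orth by (simp add: orthogonal_def)
    ultimately have "(norm (q - c0))^2 = (norm (q - c))^2 + k^2 * (norm w)^2"
      using norm_add_Pythagorean[of "q - c" "k *\<^sub>R w"] by (simp only: power_mult_distrib norm_scaleR power2_abs)
    then show ?thesis using E[OF that] unfolding \<rho>_def by simp
  qed
  have rho: "\<rho> > 0"
  proof (rule ccontr)
    assume "\<not> \<rho> > 0"
    then have "(norm (x - c))^2 \<le> 0" "(norm (y - c))^2 \<le> 0" using E2[OF two(1)] E2[OF two(2)] by simp_all
    then have "x = c" "y = c" by simp_all
    then show False using two(3) by simp
  qed
  define r where "r = sqrt \<rho>"
  have "S \<subseteq> Fin ` (sphere c r \<inter> {z. w \<bullet> z = - \<beta>})"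
  proof
    fix s assume s: "s \<in> S"
    then obtain q where sq: "s = Fin q" using noinf by (cases s) auto
    have "norm (q - c) = sqrt \<rho>" using E2[OF s[unfolded sq]] real_sqrt_unique[of "norm (q - c)" \<rho>] by simp
    then have "dist c q = r" unfolding r_def dist_norm by (simp add: norm_minus_commute)
    moreover have "w \<bullet> q = - \<beta>" using D[OF s[unfolded sq]] by simp
    ultimately show "s \<in> Fin ` (sphere c r \<inter> {z. w \<bullet> z = - \<beta>})" using sq by auto
  qed
  moreover have "aff_dim {z. w \<bullet> z = - \<beta>} = 3" using w0 by simp
  moreover have "r > 0" unfolding r_def using rho by simp
  ultimately show ?thesis unfolding on_2sphere_or_2plane_def
    apply -
    apply (rule disjI1)
    apply (rule exI[of _ c], rule exI[of _ r], rule exI[of _ "{z. w \<bullet> z = - \<beta>}"])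
    using cA affine_hyperplane by simp
qed

lemma plane_case:
  fixes S :: "hquat set"
  assumes two: "Fin x \<in> S"
  and fin: "\<And>q. Fin q \<in> S \<Longrightarrow> u1 \<bullet> q + b1 = 0 \<and> u2 \<bullet> q + b2 = 0"
  and indep: "\<And>s1 s2. (\<forall>q. s1 * (u1\<bullet>q + b1) + s2*(u2\<bullet>q + b2) = 0) \<Longrightarrow> s1 = 0 \<and> s2 = 0"
  shows "on_2sphere_or_2plane S"
proof -
  have indepu: "s1 = 0 \<and> s2 = 0" if "s1 *\<^sub>R u1 + s2 *\<^sub>R u2 = 0" for s1 s2
  proof -
    have h: "s1 * (u1\<bullet>q + b1) + s2*(u2\<bullet>q + b2) = (s1 *\<^sub>R u1 + s2 *\<^sub>R u2) \<bullet> q + (s1 * b1 + s2 * b2)" for q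
      by (simp add: algebra_simps inner_add_left)
    have "s1 * b1 + s2 * b2 = 0" using h[of x] fin[OF two] that by simp
    then have "\<forall>q. s1 * (u1\<bullet>q + b1) + s2*(u2\<bullet>q + b2) = 0" using h that by simp
    then show ?thesis using indep by blast
  qed
  have u2: "u2 \<noteq> 0" using indepu[of 0 1] by auto
  have u12: "u1 \<noteq> u2" using indepu[of 1 "-1"] by auto
  have ns: "u1 \<notin> span {u2}"
  proof
    assume "u1 \<in> span {u2}"
    then obtain k where "u1 = k *\<^sub>R u2" by (auto simp: span_singleton)
    then show False using indepu[of 1 "-k"] by simp
  qed
  have ind: "independent {u1, u2}" using u2 ns u12 by (simp add: independent_insert)
  have d2: "dim (span {u1, u2}) = 2" using dim_span_eq_card_independent[OF ind] u12 by simp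
  define V where "V = {z. u1 \<bullet> z = 0 \<and> u2 \<bullet> z = 0}"
  have subV: "subspace V" unfolding V_def subspace_def by (simp add: inner_add_right)
  have "V = {y \<in> UNIV. \<forall>z \<in> span {u1, u2}. orthogonal z y}"
  proof (intro set_eqI iffI)
    fix y assume "y \<in> V"
    then have "orthogonal y z" if "z \<in> span {u1, u2}" for z
      using orthogonal_to_span[OF that, of y] by (auto simp: V_def orthogonal_def inner_commute)
    then show "y \<in> {y \<in> UNIV. \<forall>z \<in> span {u1, u2}. orthogonal z y}"
      by (simp add: orthogonal_commute)
  next
    fix y assume "y \<in> {y \<in> UNIV. \<forall>z \<in> span {u1, u2}. orthogonal z y}"
    then show "y \<in> V" by (auto simp: V_def orthogonal_def span_base)
  qed
  then have "dim V + 2 = dim (UNIV :: quat set)"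
    using dim_subspace_orthogonal_to_vectors[of "span {u1,u2}" UNIV] d2
    by (simp add: subspace_span)
  then have dV: "dim V = 2" by simp
  define P where "P = {z. u1 \<bullet> z = - b1 \<and> u2 \<bullet> z = - b2}"
  have hx: "u1 \<bullet> x = - b1" "u2 \<bullet> x = - b2" using fin[OF two] by simp_all
  have PV: "P = (+) x ` V"
  proof (intro set_eqI iffI)
    fix z assume "z \<in> P"
    then have "z - x \<in> V" using hx by (simp add: P_def V_def inner_diff_right)
    then show "z \<in> (+) x ` V" by (metis add.commute diff_add_cancel image_eqI)
  next
    fix z assume "z \<in> (+) x ` V"
    then show "z \<in> P" using hx by (auto simp: P_def V_def inner_add_right)
  qed
  have "aff_dim P = 2" unfolding PV aff_dim_translation_eq aff_dim_subspace[OF subV] dV by simp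
  moreover have "affine P"
  proof -
    have "P = {z. u1 \<bullet> z = - b1} \<inter> {z. u2 \<bullet> z = - b2}" unfolding P_def by auto
    then show ?thesis using affine_hyperplane by auto
  qed
  moreover have "S \<subseteq> insert Inf (Fin ` P)"
  proof
    fix s assume "s \<in> S"
    show "s \<in> insert Inf (Fin ` P)"
    proof (cases s)
      case (Fin q)
      then have "u1 \<bullet> q = - b1" "u2 \<bullet> q = - b2" using fin \<open>s \<in> S\<close> by (simp_all add: eq_neg_iff_add_eq_0)
      then show ?thesis using Fin by (simp add: P_def)
    qed simp
  qed
  ultimately show ?thesis unfolding on_2sphere_or_2plane_def
    by (intro disjI2 exI[of _ P]) simp
qed

lemma sphere_plane_crit:
  fixes S :: "hquat set"
  assumes two: "Fin x \<in> S" "Fin y \<in> S" "x \<noteq> y"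
  and fin: "\<And>q. Fin q \<in> S \<Longrightarrow> a1 * (norm q)^2 + u1 \<bullet> q + b1 = 0 \<and> a2 * (norm q)^2 + u2 \<bullet> q + b2 = 0"
  and inf: "Inf \<in> S \<Longrightarrow> a1 = 0 \<and> a2 = 0"
  and indep: "\<And>s1 s2. (\<forall>q. s1 * (a1*(norm q)^2 + u1\<bullet>q + b1) + s2*(a2*(norm q)^2 + u2\<bullet>q + b2) = 0) \<Longrightarrow> s1 = 0 \<and> s2 = 0"
  shows "on_2sphere_or_2plane S"
proof (cases "a1 = 0")
  case False
  show ?thesis by (rule sphere_case[OF two fin inf indep False])
next
  case a1: True
  show ?thesis
  proof (cases "a2 = 0")
    case False
    have fin': "a2 * (norm q)^2 + u2 \<bullet> q + b2 = 0 \<and> a1 * (norm q)^2 + u1 \<bullet> q + b1 = 0"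
      if "Fin q \<in> S" for q
      using fin[OF that] by simp
    have inf': "a2 = 0 \<and> a1 = 0" if "Inf \<in> S" using inf[OF that] by simp
    have indep': "s1 = 0 \<and> s2 = 0"
      if h: "\<forall>q. s1 * (a2*(norm q)^2 + u2\<bullet>q + b2) + s2*(a1*(norm q)^2 + u1\<bullet>q + b1) = 0" for s1 s2
    proof -
      have "\<forall>q. s2 * (a1*(norm q)^2 + u1\<bullet>q + b1) + s1*(a2*(norm q)^2 + u2\<bullet>q + b2) = 0"
      proof
        fix q show "s2 * (a1*(norm q)^2 + u1\<bullet>q + b1) + s1*(a2*(norm q)^2 + u2\<bullet>q + b2) = 0"
          using spec[OF h, of q] by linarith
      qed
      then have "s2 = 0 \<and> s1 = 0" by (rule indep)
      then show "s1 = 0 \<and> s2 = 0" by simp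
    qed
    show ?thesis by (rule sphere_case[OF two fin' inf' indep' False])
  next
    case True
    have fin'': "u1 \<bullet> q + b1 = 0 \<and> u2 \<bullet> q + b2 = 0" if "Fin q \<in> S" for q
      using fin[OF that] a1 True by simp
    have indep'': "s1 = 0 \<and> s2 = 0"
      if h: "\<forall>q. s1 * (u1\<bullet>q + b1) + s2*(u2\<bullet>q + b2) = 0" for s1 s2
      using h a1 True by (intro indep) simp
    show ?thesis by (rule plane_case[OF two(1) fin'' indep''])
  qed
qed




lemma linear_repr:
  fixes l :: "quat \<Rightarrow> real"
  assumes "linear l"
  shows "\<exists>u. \<forall>x. l x = u \<bullet> x"
proof -
  define u where "u = (\<Sum>b\<in>Basis. l b *\<^sub>R b)"
  have "l x = u \<bullet> x" for x
  proof -
    have "l x = l (\<Sum>b\<in>Basis. (x \<bullet> b) *\<^sub>R b)" by (simp add: euclidean_representation)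
    also have "\<dots> = (\<Sum>b\<in>Basis. (x \<bullet> b) * l b)"
      using assms by (simp add: linear_sum linear_scale)
    also have "\<dots> = u \<bullet> x" unfolding u_def inner_sum_left inner_scaleR_left by (simp add: inner_commute mult.commute)
    finally show ?thesis .
  qed
  then show ?thesis by blast
qed

definition comm :: "quat \<Rightarrow> quat \<Rightarrow> quat" where
  "comm m s = qmul m s - qmul s m"

lemma gram:
  assumes "\<not> (m$2 = 0 \<and> m$3 = 0 \<and> m$4 = 0)"
  shows "\<exists>s1 s2. (comm m s1 \<bullet> comm m s1) * (comm m s2 \<bullet> comm m s2) - (comm m s1 \<bullet> comm m s2)^2 \<noteq> 0"
proof -
  define i :: quat where "i = vector [0,1,0,0]"
  define j :: quat where "j = vector [0,0,1,0]"
  define k :: quat where "k = vector [0,0,0,1]"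
  have mi: "comm m i = vector [0, 0, 2 * m$4, - 2 * m$3]" unfolding comm_def i_def by (simp add: qeq)
  have mj: "comm m j = vector [0, - 2 * m$4, 0, 2 * m$2]" unfolding comm_def j_def by (simp add: qeq)
  have mk: "comm m k = vector [0, 2 * m$3, - 2 * m$2, 0]" unfolding comm_def k_def by (simp add: qeq)
  consider "m$4 \<noteq> 0" | "m$3 \<noteq> 0" | "m$2 \<noteq> 0" using assms by blast
  then show ?thesis
  proof cases
    case 1
    have "(comm m i \<bullet> comm m i) * (comm m j \<bullet> comm m j) - (comm m i \<bullet> comm m j)^2
       = 16 * (m$4)^2 * ((m$2)^2 + (m$3)^2 + (m$4)^2)"
      unfolding mi mj inner_q by (simp add: algebra_simps power2_eq_square)
    moreover have "16 * (m$4)^2 * ((m$2)^2 + (m$3)^2 + (m$4)^2) > 0"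
    proof -
      have p: "(m$4)^2 > 0" using 1 by simp
      have "(m$2)^2 + (m$3)^2 + (m$4)^2 > 0" using p zero_le_power2[of "m$2"] zero_le_power2[of "m$3"] by linarith
      then show ?thesis using p by simp
    qed
    ultimately show ?thesis by (metis less_irrefl)
  next
    case 2
    have "(comm m i \<bullet> comm m i) * (comm m k \<bullet> comm m k) - (comm m i \<bullet> comm m k)^2
       = 16 * (m$3)^2 * ((m$2)^2 + (m$3)^2 + (m$4)^2)"
      unfolding mi mk inner_q by (simp add: algebra_simps power2_eq_square)
    moreover have "16 * (m$3)^2 * ((m$2)^2 + (m$3)^2 + (m$4)^2) > 0"
    proof -
      have p: "(m$3)^2 > 0" using 2 by simp
      have "(m$2)^2 + (m$3)^2 + (m$4)^2 > 0" using p zero_le_power2[of "m$2"] zero_le_power2[of "m$4"] by linarith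
      then show ?thesis using p by simp
    qed
    ultimately show ?thesis by (metis less_irrefl)
  next
    case 3
    have "(comm m j \<bullet> comm m j) * (comm m k \<bullet> comm m k) - (comm m j \<bullet> comm m k)^2
       = 16 * (m$2)^2 * ((m$2)^2 + (m$3)^2 + (m$4)^2)"
      unfolding mj mk inner_q by (simp add: algebra_simps power2_eq_square)
    moreover have "16 * (m$2)^2 * ((m$2)^2 + (m$3)^2 + (m$4)^2) > 0"
    proof -
      have p: "(m$2)^2 > 0" using 3 by simp
      have "(m$2)^2 + (m$3)^2 + (m$4)^2 > 0" using p zero_le_power2[of "m$3"] zero_le_power2[of "m$4"] by linarith
      then show ?thesis using p by simp
    qed
    ultimately show ?thesis by (metis less_irrefl)
  qed
qed

fun lift :: "hquat \<Rightarrow> quat \<times> quat" where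
  "lift (Fin q) = (q, qone)" | "lift Inf = (qone, 0)"
fun proj :: "quat \<times> quat \<Rightarrow> hquat" where
  "proj (x, y) = (if y = 0 then Inf else Fin (qmul x (qinv y)))"
fun act :: "quat \<Rightarrow> quat \<Rightarrow> quat \<Rightarrow> quat \<Rightarrow> quat \<times> quat \<Rightarrow> quat \<times> quat" where
  "act a b c d (x, y) = (qmul a x + qmul b y, qmul c x + qmul d y)"
fun rs :: "quat \<times> quat \<Rightarrow> quat \<Rightarrow> quat \<times> quat" where
  "rs (x, y) k = (qmul x k, qmul y k)"

lemma flt_proj: "flt a b c d p = proj (act a b c d (lift p))"
  by (cases p) simp_all

lemma act_comp: "act a' b' c' d' (act a b c d v) =
   act (qmul a' a + qmul b' c) (qmul a' b + qmul b' d) (qmul c' a + qmul d' c) (qmul c' b + qmul d' d) v"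
  by (cases v) (simp add: qmul_add_left qmul_add_right qmul_assoc add_ac)

lemma act_id: "act qone 0 0 qone v = v"
  by (cases v) simp

lemma act_rs: "act a b c d (rs v k) = rs (act a b c d v) k"
  by (cases v) (simp add: qmul_add_left qmul_assoc)

lemma act_zero: "act a b c d (0, 0) = (0, 0)" by simp

lemma lift_nz: "lift p \<noteq> (0, 0)"
  by (cases p) simp_all

lemma rs_rs: "k \<noteq> 0 \<Longrightarrow> rs (rs v k) (qinv k) = v"
  by (cases v) (simp add: qmul_assoc qinv_right)

lemma rs_one: "rs v qone = v" by (cases v) simp

lemma qmul_inv_cancel1: "x \<noteq> 0 \<Longrightarrow> qmul x (qmul (qinv x) z) = z"
  by (simp add: qmul_assoc[symmetric] qinv_right)
lemma qmul_inv_cancel2: "x \<noteq> 0 \<Longrightarrow> qmul (qinv x) (qmul x z) = z"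
  by (simp add: qmul_assoc[symmetric] qinv_left)

lemma proj_rs: "k \<noteq> 0 \<Longrightarrow> proj (rs v k) = proj v"
proof (cases v)
  case (Pair x y)
  assume k: "k \<noteq> 0"
  show ?thesis
  proof (cases "y = 0")
    case False
    have "qmul (qmul x k) (qinv (qmul y k)) = qmul x (qinv y)"
      using k False by (simp add: qinv_mul qmul_assoc qmul_inv_cancel1)
    then show ?thesis using Pair False k by (simp add: qmul_eq_0)
  qed (simp add: Pair)
qed

lemma proj_eq:
  assumes "u \<noteq> (0, 0)" "u' \<noteq> (0, 0)" "proj u = proj u'"
  shows "\<exists>k. k \<noteq> 0 \<and> u' = rs u k"
proof (cases u, cases u')
  fix x y x' y' assume u: "u = (x, y)" and u': "u' = (x', y')"
  show ?thesis
  proof (cases "y = 0")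
    case True
    then have y': "y' = 0" using assms(3) u u' by (auto split: if_splits)
    have x: "x \<noteq> 0" "x' \<noteq> 0" using assms(1,2) u u' True y' by auto
    show ?thesis
      by (rule exI[of _ "qmul (qinv x) x'"])
        (simp add: u u' True y' x qmul_eq_0 qinv_nz qmul_assoc[symmetric] qinv_right)
  next
    case False
    then have y': "y' \<noteq> 0" and e: "qmul x (qinv y) = qmul x' (qinv y')"
      using assms(3) u u' by (auto split: if_splits)
    have "qmul x (qmul (qinv y) y') = x'"
      using e y' by (metis qmul_assoc qinv_left qmul_one(2))
    then show ?thesis
      by (intro exI[of _ "qmul (qinv y) y'"])
        (simp add: u u' False y' qmul_eq_0 qinv_nz qmul_assoc[symmetric] qinv_right)
  qed
qed

lemma gl2_inv:
  assumes "gl2 a b c d"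
  shows "\<exists>a' b' c' d'. (\<forall>v. act a' b' c' d' (act a b c d v) = v) \<and> (\<forall>v. act a b c d (act a' b' c' d' v) = v)"
proof -
  obtain a' b' c' d' where h:
      "qmul a a' + qmul b c' = qone" "qmul a b' + qmul b d' = 0"
      "qmul c a' + qmul d c' = 0" "qmul c b' + qmul d d' = qone"
      "qmul a' a + qmul b' c = qone" "qmul a' b + qmul b' d = 0"
      "qmul c' a + qmul d' c = 0" "qmul c' b + qmul d' d = qone"
    using assms unfolding gl2_def by blast
  show ?thesis
    by (rule exI[of _ a'], rule exI[of _ b'], rule exI[of _ c'], rule exI[of _ d'])
      (simp add: act_comp h act_id)
qed




lemma qconj_add [simp]: "qconj (x + y) = qconj x + qconj y" by (simp add: qeq)
lemma qconj_diff [simp]: "qconj (x - y) = qconj x - qconj y" by (simp add: qeq)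
lemma qconj_minus [simp]: "qconj (- x) = - qconj x" by (simp add: qeq)
lemma qconj_scaleR [simp]: "qconj (r *\<^sub>R x) = r *\<^sub>R qconj x" by (simp add: qeq)
lemma qconj_one [simp]: "qconj qone = qone" by (simp add: qeq)
lemma qconj_zero [simp]: "qconj 0 = 0" by (simp add: qeq)
lemma qconj_eq_0 [simp]: "qconj x = 0 \<longleftrightarrow> x = 0" by (metis norm_eq_zero norm_qconj)

definition sand :: "quat \<Rightarrow> quat \<Rightarrow> quat \<Rightarrow> quat" where
  "sand a c x = qmul a (qmul x c)"
definition Psi :: "quat \<Rightarrow> quat \<Rightarrow> quat \<Rightarrow> quat \<Rightarrow> quat" where
  "Psi m a c x = comm m (sand a c x)"

lemma Psi_add: "Psi m a c (x + y) = Psi m a c x + Psi m a c y"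
  by (simp add: Psi_def comm_def sand_def qmul_add_left qmul_add_right algebra_simps)
lemma Psi_diff: "Psi m a c (x - y) = Psi m a c x - Psi m a c y"
  by (simp add: Psi_def comm_def sand_def qmul_diff_left qmul_diff_right algebra_simps)
lemma Psi_scaleR: "Psi m a c (r *\<^sub>R x) = r *\<^sub>R Psi m a c x"
  by (simp add: Psi_def comm_def sand_def algebra_simps)
lemma Psi_minus: "Psi m a c (- x) = - Psi m a c x"
  by (simp add: Psi_def comm_def sand_def algebra_simps)
lemma Psi_zero: "Psi m a c 0 = 0"
  by (simp add: Psi_def comm_def sand_def)

lemma conj_rel: "x \<noteq> 0 \<Longrightarrow> qmul l x = qmul x m \<Longrightarrow> qmul (qinv x) l = qmul m (qinv x)"
proof -
  assume x: "x \<noteq> 0" and e: "qmul l x = qmul x m"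
  have "qmul (qinv x) l = qmul (qinv x) (qmul (qmul l x) (qinv x))"
    using x by (simp add: qmul_assoc qinv_right)
  also have "\<dots> = qmul m (qinv x)" using x by (simp add: e qmul_assoc qmul_inv_cancel2)
  finally show ?thesis .
qed

lemma conj_swap:
  assumes w: "w \<noteq> 0" and e: "qmul m w = qmul w l"
  shows "qmul l (qconj w) = qmul (qconj w) m"
proof -
  have n: "(norm w)^2 \<noteq> 0" using w by simp
  have "qmul (qconj w) (qmul m w) = (norm w)^2 *\<^sub>R l"
    by (simp add: e qmul_assoc[symmetric] qmul_conj_left)
  then have "qmul (qmul (qconj w) (qmul m w)) (qconj w) = (norm w)^2 *\<^sub>R qmul l (qconj w)" by simp
  moreover have "qmul (qmul (qconj w) (qmul m w)) (qconj w) = (norm w)^2 *\<^sub>R qmul (qconj w) m"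
    by (simp add: qmul_assoc qmul_conj_right)
  ultimately show ?thesis using n by simp
qed

lemma norm_diff_sq: "(norm (q - p))^2 = (norm q)^2 - 2 * (p \<bullet> q) + (norm p)^2"
  for p q :: quat
  by (simp add: power2_norm_eq_inner inner_diff_left inner_diff_right inner_commute)

lemma core:
  fixes n1 n2 n3 n4 :: quat and S :: "hquat set"
  assumes q12: "q1 \<noteq> q2" and S1: "Fin q1 \<in> S" and S2: "Fin q2 \<in> S" and S3: "p3 \<in> S"
    and p31: "p3 \<noteq> Fin q1" and p32: "p3 \<noteq> Fin q2"
    and eig: "\<And>p. p \<in> S \<Longrightarrow> \<exists>l. act n1 n2 n3 n4 (lift p) = rs (lift p) l"
    and nz: "act n1 n2 n3 n4 (lift p3) \<noteq> (0, 0)"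
    and nsph: "\<not> on_2sphere_or_2plane S"
  shows "\<exists>r. r \<noteq> 0 \<and> (\<forall>v. act n1 n2 n3 n4 v = rs v (r *\<^sub>R qone))"
proof -
  define N where "N = act n1 n2 n3 n4"
  define \<delta> where "\<delta> = q1 - q2"
  define di where "di = qinv \<delta>"
  have d0: "\<delta> \<noteq> 0" using q12 by (simp add: \<delta>_def)
  have di0: "di \<noteq> 0" using d0 by (simp add: di_def qinv_nz)
  define cA where "cA v = qmul di (fst v - qmul q2 (snd v))" for v :: "quat \<times> quat"
  define cB where "cB v = snd v - cA v" for v :: "quat \<times> quat"
  have recon: "v = (qmul q1 (cA v) + qmul q2 (cB v), cA v + cB v)" for v
  proof -
    have "qmul q1 (cA v) + qmul q2 (cB v) = qmul \<delta> (cA v) + qmul q2 (snd v)"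
      by (simp add: cB_def \<delta>_def qmul_diff_left qmul_diff_right algebra_simps)
    also have "\<dots> = fst v"
      by (simp add: cA_def di_def qmul_inv_cancel1[OF d0])
    finally show ?thesis by (simp add: cB_def)
  qed
  have coordA: "cA (qmul q1 a + qmul q2 b, a + b) = a" for a b
  proof -
    have "qmul q1 a + qmul q2 b - qmul q2 (a + b) = qmul \<delta> a"
      by (simp add: \<delta>_def qmul_diff_left qmul_add_right)
    then show ?thesis by (simp add: cA_def di_def qmul_inv_cancel2[OF d0])
  qed
  have coordB: "cB (qmul q1 a + qmul q2 b, a + b) = b" for a b
    using coordA by (simp add: cB_def)
  have cA_rs: "cA (rs v k) = qmul (cA v) k" for v k
    by (cases v) (simp add: cA_def qmul_assoc qmul_diff_left)
  have cB_rs: "cB (rs v k) = qmul (cB v) k" for v k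
    by (cases v) (simp add: cB_def cA_rs[unfolded cA_def] qmul_diff_left cA_def qmul_assoc)
  obtain l1 where l1: "N (q1, qone) = rs (q1, qone) l1" using eig[OF S1] by (auto simp: N_def)
  obtain l2 where l2: "N (q2, qone) = rs (q2, qone) l2" using eig[OF S2] by (auto simp: N_def)
  have h1: "qmul n1 q1 + n2 = qmul q1 l1" "qmul n3 q1 + n4 = l1" using l1 by (simp_all add: N_def)
  have h2: "qmul n1 q2 + n2 = qmul q2 l2" "qmul n3 q2 + n4 = l2" using l2 by (simp_all add: N_def)
  have Nform: "N v = (qmul q1 (qmul l1 (cA v)) + qmul q2 (qmul l2 (cB v)), qmul l1 (cA v) + qmul l2 (cB v))" for v
  proof -
    define a where "a = cA v"
    define b where "b = cB v"
    have v: "v = (qmul q1 a + qmul q2 b, a + b)" unfolding a_def b_def by (rule recon)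
    have e1: "qmul (qmul n1 q1 + n2) a = qmul (qmul q1 l1) a" using h1 by simp
    have e2: "qmul (qmul n1 q2 + n2) b = qmul (qmul q2 l2) b" using h2 by simp
    have e3: "qmul (qmul n3 q1 + n4) a = qmul l1 a" using h1 by simp
    have e4: "qmul (qmul n3 q2 + n4) b = qmul l2 b" using h2 by simp
    have "N v = (qmul (qmul n1 q1 + n2) a + qmul (qmul n1 q2 + n2) b, qmul (qmul n3 q1 + n4) a + qmul (qmul n3 q2 + n4) b)"
      by (subst v) (simp add: N_def qmul_add_left qmul_add_right qmul_assoc add_ac)
    then show ?thesis unfolding e1 e2 e3 e4 a_def[symmetric] b_def[symmetric] by (simp add: qmul_assoc)
  qed
  have cAN: "cA (N v) = qmul l1 (cA v)" for v
    by (subst Nform) (rule coordA)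
  have cBN: "cB (N v) = qmul l2 (cB v)" for v
    by (subst Nform) (rule coordB)
  have eigc: "qmul l1 (cA v) = qmul (cA v) l \<and> qmul l2 (cB v) = qmul (cB v) l" if "N v = rs v l" for v l
    using cAN[of v] cBN[of v] that cA_rs cB_rs by simp
  define v3 where "v3 = lift p3"
  obtain \<mu> where l3: "N v3 = rs v3 \<mu>" using eig[OF S3] by (auto simp: N_def v3_def)
  define a3 where "a3 = cA v3"
  define b3 where "b3 = cB v3"
  have r1: "qmul l1 a3 = qmul a3 \<mu>" and r2: "qmul l2 b3 = qmul b3 \<mu>"
    using eigc[OF l3] by (simp_all add: a3_def b3_def)
  have a30: "a3 \<noteq> 0"
  proof
    assume "a3 = 0"
    then have "v3 = (qmul q2 b3, b3)" using recon[of v3] by (simp add: a3_def b3_def)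
    then show False using p32 by (cases p3) (auto simp: v3_def)
  qed
  have b30: "b3 \<noteq> 0"
  proof
    assume "b3 = 0"
    then have "v3 = (qmul q1 a3, a3)" using recon[of v3] by (simp add: a3_def b3_def)
    then show False using p31 by (cases p3) (auto simp: v3_def)
  qed
  show ?thesis
  proof (cases "\<mu>$2 = 0 \<and> \<mu>$3 = 0 \<and> \<mu>$4 = 0")
    case True
    define r where "r = \<mu>$1"
    have mu: "\<mu> = r *\<^sub>R qone" using True by (simp add: qeq r_def)
    have "qmul l1 a3 = qmul (r *\<^sub>R qone) a3" using r1 mu by simp
    then have L1: "l1 = r *\<^sub>R qone" using a30 qmul_cancel_right by blast
    have "qmul l2 b3 = qmul (r *\<^sub>R qone) b3" using r2 mu by simp
    then have L2: "l2 = r *\<^sub>R qone" using b30 qmul_cancel_right by blast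
    have all: "N v = rs v (r *\<^sub>R qone)" for v
    proof -
      have "rs v (r *\<^sub>R qone) = (r *\<^sub>R fst v, r *\<^sub>R snd v)" by (cases v) simp
      also have "\<dots> = (r *\<^sub>R (qmul q1 (cA v) + qmul q2 (cB v)), r *\<^sub>R (cA v + cB v))"
        using recon[of v] by (metis fst_conv snd_conv)
      also have "\<dots> = N v" unfolding Nform L1 L2 by (simp add: scaleR_right_distrib)
      finally show ?thesis by simp
    qed
    have "r \<noteq> 0"
    proof
      assume "r = 0"
      then have "N v3 = (0, 0)" using all[of v3] by (cases v3) simp
      then show False using nz by (simp add: N_def v3_def)
    qed
    then show ?thesis using all unfolding N_def by blast
  next
    case nonreal: False
    define c where "c = qconj (qinv b3)"
    have c0: "c \<noteq> 0" using b30 by (simp add: c_def qinv_nz)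
    define P where "P = Psi \<mu> (qinv a3) c"
    have ia: "qmul (qinv a3) l1 = qmul \<mu> (qinv a3)" by (rule conj_rel[OF a30 r1])
    have ib: "qmul (qinv b3) l2 = qmul \<mu> (qinv b3)" by (rule conj_rel[OF b30 r2])
    have key: "P (qmul (cA v) (qconj (cB v))) = 0" if "N v = rs v l" for v l
    proof -
      define \<alpha> where "\<alpha> = cA v"
      define \<beta> where "\<beta> = cB v"
      have ea: "qmul l1 \<alpha> = qmul \<alpha> l" and eb: "qmul l2 \<beta> = qmul \<beta> l"
        using eigc[OF that] by (simp_all add: \<alpha>_def \<beta>_def)
      define z where "z = qmul (qinv a3) \<alpha>"
      define w where "w = qmul (qinv b3) \<beta>"
      have mz: "qmul \<mu> z = qmul z l"
        unfolding z_def by (simp add: qmul_assoc[symmetric] ia[symmetric]) (simp add: qmul_assoc ea)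
      have mw: "qmul \<mu> w = qmul w l"
        unfolding w_def by (simp add: qmul_assoc[symmetric] ib[symmetric]) (simp add: qmul_assoc eb)
      show ?thesis
      proof (cases "\<beta> = 0")
        case True
        then show ?thesis by (simp add: \<alpha>_def[symmetric] \<beta>_def[symmetric] P_def Psi_zero)
      next
        case False
        then have w0: "w \<noteq> 0" using b30 by (simp add: w_def qmul_eq_0 qinv_nz)
        have sw: "qmul l (qconj w) = qmul (qconj w) \<mu>" by (rule conj_swap[OF w0 mw])
        have "sand (qinv a3) c (qmul \<alpha> (qconj \<beta>)) = qmul z (qconj w)"
          by (simp add: sand_def c_def z_def w_def qconj_mul qmul_assoc)
        moreover have "comm \<mu> (qmul z (qconj w)) = 0"
          unfolding comm_def by (simp add: qmul_assoc[symmetric] mz) (simp add: qmul_assoc sw)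
        ultimately show ?thesis by (simp add: P_def Psi_def \<alpha>_def \<beta>_def)
      qed
    qed
    have finc: "P (qmul di (q - q2)) - (norm (qmul di (q - q2)))^2 *\<^sub>R P qone = 0" if qS: "Fin q \<in> S" for q
    proof -
      obtain l where l: "N (q, qone) = rs (q, qone) l" using eig[OF qS] by (auto simp: N_def)
      define \<alpha> where "\<alpha> = qmul di (q - q2)"
      have "cA (q, qone) = \<alpha>" by (simp add: cA_def \<alpha>_def)
      moreover have "cB (q, qone) = qone - \<alpha>" by (simp add: cB_def cA_def \<alpha>_def)
      ultimately have "P (qmul \<alpha> (qone - qconj \<alpha>)) = 0"
        using key[OF l] by simp
      moreover have "qmul \<alpha> (qone - qconj \<alpha>) = \<alpha> - (norm \<alpha>)^2 *\<^sub>R qone"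
        by (simp add: qmul_diff_right qmul_conj_right)
      ultimately have "P \<alpha> - (norm \<alpha>)^2 *\<^sub>R P qone = 0"
        by (simp add: Psi_diff Psi_scaleR P_def)
      then show ?thesis by (simp add: \<alpha>_def)
    qed
    have infc: "P qone = 0" if iS: "Inf \<in> S"
    proof -
      obtain l where l: "N (qone, 0) = rs (qone, 0) l" using eig[OF iS] by (auto simp: N_def)
      have "cA (qone, 0) = di" "cB (qone, 0) = - di" by (simp_all add: cA_def cB_def)
      then have "P (qmul di (qconj (- di))) = 0" using key[OF l] by simp
      then have "(norm di)^2 *\<^sub>R P qone = 0"
        by (simp add: qmul_conj_right Psi_minus Psi_scaleR P_def)
      then show ?thesis using di0 by simp
    qed
    define F where "F g q = g \<bullet> P (qmul di (q - q2)) - (norm (qmul di (q - q2)))^2 * (g \<bullet> P qone)" for g q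
    have F0: "F g q = 0" if "Fin q \<in> S" for g q
    proof -
      have "g \<bullet> (P (qmul di (q - q2)) - (norm (qmul di (q - q2)))^2 *\<^sub>R P qone) = 0"
        using finc[OF that] by simp
      then show ?thesis by (simp add: F_def inner_diff_right)
    qed
    define coef where "coef g = - ((norm di)^2 * (g \<bullet> P qone))" for g
    have shape: "\<exists>u b. \<forall>q. F g q = (coef g) * (norm q)^2 + u \<bullet> q + b" for g
    proof -
      have lin: "linear (\<lambda>q. g \<bullet> P (qmul di q))"
        by (rule linearI) (simp_all add: qmul_add_right P_def Psi_add Psi_scaleR inner_add_right)
      obtain u0 where u0: "\<forall>q. g \<bullet> P (qmul di q) = u0 \<bullet> q" using linear_repr[OF lin] by blast
      define G where "G = g \<bullet> P qone"
      define D where "D = (norm di)^2"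
      have "F g q = (- D * G) * (norm q)^2 + (u0 + (2 * D * G) *\<^sub>R q2) \<bullet> q + (- (g \<bullet> P (qmul di q2)) - D * G * (norm q2)^2)" for q
      proof -
        have nn: "(norm (qmul di (q - q2)))^2 = D * (norm (q - q2))^2"
          by (simp add: norm_qmul power_mult_distrib D_def)
        have "F g q = g \<bullet> P (qmul di q) - g \<bullet> P (qmul di q2) - D * (norm (q - q2))^2 * G"
          unfolding F_def nn by (simp add: G_def qmul_diff_right P_def Psi_diff inner_diff_right)
        then show ?thesis using u0 by (simp add: norm_diff_sq inner_add_left algebra_simps)
      qed
      then show ?thesis unfolding D_def G_def coef_def by auto
    qed
    obtain s1 s2 where gr: "(comm \<mu> s1 \<bullet> comm \<mu> s1) * (comm \<mu> s2 \<bullet> comm \<mu> s2) - (comm \<mu> s1 \<bullet> comm \<mu> s2)^2 \<noteq> 0"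
      using gram[OF nonreal] by blast
    define g1 where "g1 = comm \<mu> s1"
    define g2 where "g2 = comm \<mu> s2"
    have Pt: "P (qmul a3 (qmul s (qinv c))) = comm \<mu> s" for s
      by (simp add: P_def Psi_def sand_def qmul_assoc qmul_inv_cancel2[OF a30] qinv_left[OF c0])
    have diff: "F g (q2 + qmul \<delta> t) - F g (q2 - qmul \<delta> t) = 2 * (g \<bullet> P t)" for g t
    proof -
      have "qmul di (q2 + qmul \<delta> t - q2) = t" by (simp add: di_def qmul_inv_cancel2[OF d0])
      moreover have "qmul di (q2 - qmul \<delta> t - q2) = - t" by (simp add: di_def qmul_inv_cancel2[OF d0])
      ultimately show ?thesis by (simp add: F_def Psi_minus P_def)
    qed
    have indep: "x1 = 0 \<and> x2 = 0" if h: "\<forall>q. x1 * F g1 q + x2 * F g2 q = 0" for x1 x2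
    proof -
      have e: "x1 * (g1 \<bullet> comm \<mu> s) + x2 * (g2 \<bullet> comm \<mu> s) = 0" for s
      proof -
        define t where "t = qmul a3 (qmul s (qinv c))"
        have "x1 * (F g1 (q2 + qmul \<delta> t) - F g1 (q2 - qmul \<delta> t)) + x2 * (F g2 (q2 + qmul \<delta> t) - F g2 (q2 - qmul \<delta> t)) = 0"
          using h[rule_format, of "q2 + qmul \<delta> t"] h[rule_format, of "q2 - qmul \<delta> t"] by (simp add: algebra_simps)
        then show ?thesis unfolding diff t_def Pt by simp
      qed
      have ea: "x1 * (g1 \<bullet> g1) + x2 * (g1 \<bullet> g2) = 0" using e[of s1] by (simp add: g1_def g2_def inner_commute)
      have eb: "x1 * (g1 \<bullet> g2) + x2 * (g2 \<bullet> g2) = 0" using e[of s2] by (simp add: g1_def g2_def)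
      have det: "(g1 \<bullet> g1) * (g2 \<bullet> g2) - (g1 \<bullet> g2)^2 \<noteq> 0" using gr by (simp add: g1_def g2_def)
      have "x1 * ((g1 \<bullet> g1) * (g2 \<bullet> g2) - (g1 \<bullet> g2)^2) = (g2 \<bullet> g2) * (x1 * (g1 \<bullet> g1) + x2 * (g1 \<bullet> g2)) - (g1 \<bullet> g2) * (x1 * (g1 \<bullet> g2) + x2 * (g2 \<bullet> g2))"
        by (simp add: algebra_simps power2_eq_square)
      then have "x1 = 0" using ea eb det by simp
      moreover have "x2 * ((g1 \<bullet> g1) * (g2 \<bullet> g2) - (g1 \<bullet> g2)^2) = (g1 \<bullet> g1) * (x1 * (g1 \<bullet> g2) + x2 * (g2 \<bullet> g2)) - (g1 \<bullet> g2) * (x1 * (g1 \<bullet> g1) + x2 * (g1 \<bullet> g2))"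
        by (simp add: algebra_simps power2_eq_square)
      then have "x2 = 0" using ea eb det by simp
      ultimately show ?thesis by simp
    qed
    obtain u1 b1 where sh1: "\<forall>q. F g1 q = (coef g1) * (norm q)^2 + u1 \<bullet> q + b1"
      using shape by blast
    obtain u2 b2 where sh2: "\<forall>q. F g2 q = (coef g2) * (norm q)^2 + u2 \<bullet> q + b2"
      using shape by blast
    have "on_2sphere_or_2plane S"
    proof (rule sphere_plane_crit[OF S1 S2 q12])
      fix q assume "Fin q \<in> S"
      then show "(coef g1) * (norm q)^2 + u1 \<bullet> q + b1 = 0 \<and>
                 (coef g2) * (norm q)^2 + u2 \<bullet> q + b2 = 0"
        using F0 sh1 sh2 by metis
    next
      assume "Inf \<in> S"
      then show "coef g1 = 0 \<and> coef g2 = 0"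
        using infc by (simp add: coef_def)
    next
      fix x1 x2
      assume "\<forall>q. x1 * ((coef g1) * (norm q)^2 + u1 \<bullet> q + b1) +
                  x2 * ((coef g2) * (norm q)^2 + u2 \<bullet> q + b2) = 0"
      then have "\<forall>q. x1 * F g1 q + x2 * F g2 q = 0" using sh1 sh2 by simp
      then show "x1 = 0 \<and> x2 = 0" by (rule indep)
    qed
    then show ?thesis using nsph by blast
  qed
qed

lemma three_points:
  assumes "finite S" "card S = 5"
  shows "\<exists>q1 q2 p3. q1 \<noteq> q2 \<and> Fin q1 \<in> S \<and> Fin q2 \<in> S \<and> p3 \<in> S \<and> p3 \<noteq> Fin q1 \<and> p3 \<noteq> Fin q2"
proof -
  have c1: "card (S - {Inf}) \<ge> 4" using assms card_Diff_singleton_if[of S Inf] by (auto split: if_splits)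
  then obtain p1 where p1: "p1 \<in> S - {Inf}"
    by (metis all_not_in_conv card.empty not_numeral_le_zero)
  have "card (S - {Inf} - {p1}) \<ge> 3" using c1 p1 assms(1) by (simp add: card_Diff_singleton)
  then obtain p2 where p2: "p2 \<in> S - {Inf} - {p1}"
    by (metis all_not_in_conv card.empty not_numeral_le_zero)
  have "card (S - {p1} - {p2}) \<ge> 3" using assms p1 p2 by (simp add: card_Diff_singleton)
  then obtain p3 where p3: "p3 \<in> S - {p1} - {p2}"
    by (metis all_not_in_conv card.empty not_numeral_le_zero)
  obtain q1 where "p1 = Fin q1" using p1 by (cases p1) auto
  moreover obtain q2 where "p2 = Fin q2" using p2 by (cases p2) auto
  ultimately show ?thesis using p1 p2 p3 by blast
qed

theorem mainTheorem4:
  fixes q :: "nat \<Rightarrow> hquat" and T T' :: "hquat \<Rightarrow> hquat"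
  assumes "inj_on q {1..5}"
    and "\<not> on_2sphere_or_2plane (q ` {1..5})"
    and "is_flt T" and "is_flt T'"
    and "\<forall>n\<in>{1..5}. T (q n) = T' (q n)"
  shows "T = T'"
proof -
  define S where "S = q ` {1..5}"
  obtain a b c d where g: "gl2 a b c d" and T: "T = flt a b c d" using assms(3) unfolding is_flt_def by blast
  obtain A B C D where G: "gl2 A B C D" and T': "T' = flt A B C D" using assms(4) unfolding is_flt_def by blast
  obtain a' b' c' d' where ginv: "\<And>v. act a' b' c' d' (act a b c d v) = v" using gl2_inv[OF g] by blast
  obtain A' B' C' D' where Ginv1: "\<And>v. act A' B' C' D' (act A B C D v) = v"
    and Ginv2: "\<And>v. act A B C D (act A' B' C' D' v) = v" using gl2_inv[OF G] by blast
  define n1 where "n1 = qmul A' a + qmul B' c"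
  define n2 where "n2 = qmul A' b + qmul B' d"
  define n3 where "n3 = qmul C' a + qmul D' c"
  define n4 where "n4 = qmul C' b + qmul D' d"
  have Nd: "act n1 n2 n3 n4 v = act A' B' C' D' (act a b c d v)" for v
    unfolding n1_def n2_def n3_def n4_def by (simp add: act_comp)
  have inja: "act a b c d v = (0, 0) \<Longrightarrow> v = (0, 0)" for v using ginv[of v] by simp
  have injA: "act A B C D v = (0, 0) \<Longrightarrow> v = (0, 0)" for v using Ginv1[of v] by simp
  have injA': "act A' B' C' D' v = (0, 0) \<Longrightarrow> v = (0, 0)" for v using Ginv2[of v] by simp
  have eqS: "T p = T' p" if "p \<in> S" for p using assms(5) that by (auto simp: S_def)
  have eig: "\<exists>l. act n1 n2 n3 n4 (lift p) = rs (lift p) l" if pS: "p \<in> S" for p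
  proof -
    have u: "act a b c d (lift p) \<noteq> (0, 0)" using inja lift_nz by blast
    have u': "act A B C D (lift p) \<noteq> (0, 0)" using injA lift_nz by blast
    have "proj (act a b c d (lift p)) = proj (act A B C D (lift p))"
      using eqS[OF pS] by (simp add: T T' flt_proj)
    then obtain k where k: "k \<noteq> 0" "act A B C D (lift p) = rs (act a b c d (lift p)) k"
      using proj_eq[OF u u'] by blast
    have "lift p = rs (act n1 n2 n3 n4 (lift p)) k"
      using Ginv1[of "lift p"] by (simp add: k(2) act_rs Nd)
    then have "rs (lift p) (qinv k) = rs (rs (act n1 n2 n3 n4 (lift p)) k) (qinv k)"
      by (rule arg_cong[where f="\<lambda>v. rs v (qinv k)"])
    then have "rs (lift p) (qinv k) = act n1 n2 n3 n4 (lift p)" by (simp only: rs_rs[OF k(1)])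
    then show ?thesis by metis
  qed
  have fin: "finite S" by (simp add: S_def)
  have card: "card S = 5" using card_image[OF assms(1)] by (simp add: S_def)
  obtain q1 q2 p3 where pts: "q1 \<noteq> q2" "Fin q1 \<in> S" "Fin q2 \<in> S" "p3 \<in> S" "p3 \<noteq> Fin q1" "p3 \<noteq> Fin q2"
    using three_points[OF fin card] by blast
  have nz: "act n1 n2 n3 n4 (lift p3) \<noteq> (0, 0)"
    unfolding Nd using injA' inja lift_nz by blast
  obtain r where r: "r \<noteq> 0" "\<And>v. act n1 n2 n3 n4 v = rs v (r *\<^sub>R qone)"
    using core[OF pts eig nz] assms(2) unfolding S_def by blast
  have rq: "r *\<^sub>R qone \<noteq> 0" using r(1) by simp
  show "T = T'"
  proof
    fix p
    have "act a b c d (lift p) = act A B C D (act A' B' C' D' (act a b c d (lift p)))" by (simp add: Ginv2)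
    also have "\<dots> = rs (act A B C D (lift p)) (r *\<^sub>R qone)" by (simp add: Nd[symmetric] r(2) act_rs)
    finally show "T p = T' p" by (simp add: T T' flt_proj proj_rs[OF rq])
  qed
qed


end
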